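(* Let $G$ be a graph. Then for every induced subgraph $H$ of $G$, \[\chi(G) \leq \frac{1}{2} \left(\omega(G) + \Delta(G) + 1 \right) + \frac{5\kappa(\overline{G}) + 3\chi(H) - |H|}{4}.\]
   Context: All graphs are finite and simple with non-empty vertex set; induced subgraphs have non-empty vertex set. $|G|$ denotes the number of vertices, $\chi$ the chromatic number, $\omega$ the clique number, $\Delta$ the maximum degree. $\overline{G}$ is the complement of $G$, and $\kappa(\overline{G})$ is its vertex connectivity: the minimum size of a set $K$ of vertices with $\overline{G}-K$ disconnected, or $|G|-1$ if $\overline{G}$ is complete. *)

theory Defs
  imports Complex_Main
begin

definition simple_graph :: "'a set \<Rightarrow> ('a \<Rightarrow> 'a \<Rightarrow> bool) \<Rightarrow> bool" where
  "simple_graph V E \<longleftrightarrow> finite V \<and> V \<noteq> {} \<and>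
     (\<forall>x y. E x y \<longrightarrow> x \<in> V \<and> y \<in> V) \<and>
     (\<forall>x y. E x y \<longrightarrow> E y x) \<and> (\<forall>x. \<not> E x x)"

definition induced_edges :: "'a set \<Rightarrow> ('a \<Rightarrow> 'a \<Rightarrow> bool) \<Rightarrow> 'a \<Rightarrow> 'a \<Rightarrow> bool" where
  "induced_edges S E x y \<longleftrightarrow> x \<in> S \<and> y \<in> S \<and> E x y"

definition complement_edges :: "'a set \<Rightarrow> ('a \<Rightarrow> 'a \<Rightarrow> bool) \<Rightarrow> 'a \<Rightarrow> 'a \<Rightarrow> bool" where
  "complement_edges V E x y \<longleftrightarrow> x \<in> V \<and> y \<in> V \<and> x \<noteq> y \<and> \<not> E x y"

definition proper_colouring :: "'a set \<Rightarrow> ('a \<Rightarrow> 'a \<Rightarrow> bool) \<Rightarrow> nat \<Rightarrow> ('a \<Rightarrow> nat) \<Rightarrow> bool" where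
  "proper_colouring V E k c \<longleftrightarrow> c ` V \<subseteq> {..<k} \<and> (\<forall>x\<in>V. \<forall>y\<in>V. E x y \<longrightarrow> c x \<noteq> c y)"

definition chromatic_number :: "'a set \<Rightarrow> ('a \<Rightarrow> 'a \<Rightarrow> bool) \<Rightarrow> nat" where
  "chromatic_number V E = (LEAST k. \<exists>c. proper_colouring V E k c)"

definition is_clique :: "'a set \<Rightarrow> ('a \<Rightarrow> 'a \<Rightarrow> bool) \<Rightarrow> 'a set \<Rightarrow> bool" where
  "is_clique V E K \<longleftrightarrow> K \<subseteq> V \<and> (\<forall>x\<in>K. \<forall>y\<in>K. x \<noteq> y \<longrightarrow> E x y)"

definition clique_number :: "'a set \<Rightarrow> ('a \<Rightarrow> 'a \<Rightarrow> bool) \<Rightarrow> nat" where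
  "clique_number V E = Max {card K | K. is_clique V E K}"

definition degree :: "'a set \<Rightarrow> ('a \<Rightarrow> 'a \<Rightarrow> bool) \<Rightarrow> 'a \<Rightarrow> nat" where
  "degree V E v = card {u \<in> V. E v u}"

definition max_degree :: "'a set \<Rightarrow> ('a \<Rightarrow> 'a \<Rightarrow> bool) \<Rightarrow> nat" where
  "max_degree V E = Max (degree V E ` V)"

definition disconnected :: "'a set \<Rightarrow> ('a \<Rightarrow> 'a \<Rightarrow> bool) \<Rightarrow> bool" where
  "disconnected V E \<longleftrightarrow> (\<exists>u\<in>V. \<exists>v\<in>V. \<not> (induced_edges V E)\<^sup>*\<^sup>* u v)"

definition complete_graph :: "'a set \<Rightarrow> ('a \<Rightarrow> 'a \<Rightarrow> bool) \<Rightarrow> bool" where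
  "complete_graph V E \<longleftrightarrow> (\<forall>x\<in>V. \<forall>y\<in>V. x \<noteq> y \<longrightarrow> E x y)"

definition vertex_connectivity :: "'a set \<Rightarrow> ('a \<Rightarrow> 'a \<Rightarrow> bool) \<Rightarrow> nat" where
  "vertex_connectivity V E =
     (if complete_graph V E then card V - 1
      else Min {card K | K. K \<subseteq> V \<and> disconnected (V - K) E})"

end

theory Submission
  imports Defs
begin

locale sg =
  fixes E :: "'a \<Rightarrow> 'a \<Rightarrow> bool"
  assumes symE: "E x y \<Longrightarrow> E y x" and irrE: "\<not> E x x"
begin

definition chi where "chi S = chromatic_number S E"
definition om where "om S = clique_number S E"
definition Dl where "Dl S = max_degree S E"
definition indep where "indep S \<longleftrightarrow> (\<forall>x\<in>S. \<forall>y\<in>S. \<not> E x y)"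
definition prop_on where "prop_on S c \<longleftrightarrow> (\<forall>x\<in>S. \<forall>y\<in>S. E x y \<longrightarrow> c x \<noteq> (c y :: nat))"

lemma chi_le_card_image:
  assumes "finite S" "prop_on S c"
  shows "chi S \<le> card (c ` S)"
proof -
  obtain g where g: "bij_betw g (c ` S) {0..<card (c ` S)}"
    using ex_bij_betw_finite_nat assms(1) by blast
  have "proper_colouring S E (card (c ` S)) (g \<circ> c)"
    unfolding proper_colouring_def
  proof
    show "(g \<circ> c) ` S \<subseteq> {..<card (c ` S)}" using g by (auto simp: bij_betw_def)
    show "\<forall>x\<in>S. \<forall>y\<in>S. E x y \<longrightarrow> (g \<circ> c) x \<noteq> (g \<circ> c) y"
      using g assms(2) unfolding prop_on_def bij_betw_def inj_on_def by auto
  qed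
  then show ?thesis unfolding chi_def chromatic_number_def by (blast intro: Least_le)
qed

lemma chi_opt:
  assumes "finite S"
  shows "\<exists>c. proper_colouring S E (chi S) c"
proof -
  obtain g where g: "bij_betw g S {0..<card S}"
    using ex_bij_betw_finite_nat assms(1) by blast
  have "proper_colouring S E (card S) g"
    using g irrE unfolding proper_colouring_def bij_betw_def inj_on_def by auto
  then show ?thesis unfolding chi_def chromatic_number_def
    using LeastI_ex[of "\<lambda>k. \<exists>c. proper_colouring S E k c"] by blast
qed

lemma proper_prop: "proper_colouring S E k c \<Longrightarrow> prop_on S c"
  unfolding proper_colouring_def prop_on_def by auto

lemma proper_chi: "proper_colouring S E k c \<Longrightarrow> chi S \<le> k"
  unfolding chi_def chromatic_number_def by (blast intro: Least_le)

lemma chi_le_card: assumes "finite S" shows "chi S \<le> card S"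
proof -
  obtain g where g: "bij_betw g S {0..<card S}"
    using ex_bij_betw_finite_nat assms(1) by blast
  have "proper_colouring S E (card S) g"
    using g irrE unfolding proper_colouring_def bij_betw_def inj_on_def by auto
  then show ?thesis by (rule proper_chi)
qed

lemma chi_empty: "chi {} = 0"
  using chi_le_card[of "{}"] by simp

lemma chi_pos: "finite S \<Longrightarrow> S \<noteq> {} \<Longrightarrow> chi S \<ge> 1"
  using chi_opt[of S] unfolding proper_colouring_def by (cases "chi S") auto

lemma chi_mono: assumes "finite S" "T \<subseteq> S" shows "chi T \<le> chi S"
proof -
  obtain c where c: "proper_colouring S E (chi S) c" using chi_opt assms(1) by blast
  then have "proper_colouring T E (chi S) c" using assms(2) unfolding proper_colouring_def by auto
  then show ?thesis by (rule proper_chi)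
qed

lemma chi_union: assumes "finite A" "finite B" shows "chi (A \<union> B) \<le> chi A + chi B"
proof -
  obtain a where a: "proper_colouring A E (chi A) a" using chi_opt assms(1) by blast
  obtain b where b: "proper_colouring B E (chi B) b" using chi_opt assms(2) by blast
  define c where "c x = (if x \<in> A then a x else chi A + b x)" for x
  have "proper_colouring (A \<union> B) E (chi A + chi B) c"
    unfolding proper_colouring_def
  proof
    show "c ` (A \<union> B) \<subseteq> {..<chi A + chi B}"
    proof
      fix z assume "z \<in> c ` (A \<union> B)"
      then obtain x where x: "x \<in> A \<union> B" "z = c x" by auto
      show "z \<in> {..<chi A + chi B}"
      proof (cases "x \<in> A")
        case True then have "a x < chi A" using a unfolding proper_colouring_def by auto
        then show ?thesis using x True by (simp add: c_def)
      next
        case False then have "x \<in> B" using x by auto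
        then have "b x < chi B" using b unfolding proper_colouring_def by auto
        then show ?thesis using x False by (simp add: c_def)
      qed
    qed
    show "\<forall>x\<in>A \<union> B. \<forall>y\<in>A \<union> B. E x y \<longrightarrow> c x \<noteq> c y"
    proof (intro ballI impI)
      fix x y assume xy: "x \<in> A \<union> B" "y \<in> A \<union> B" "E x y"
      have "a x < chi A" if "x \<in> A" for x using a that unfolding proper_colouring_def by auto
      have bb: "b x \<noteq> b y" if "x \<in> B" "y \<in> B" using b that xy(3) unfolding proper_colouring_def by blast
      have aa: "a x \<noteq> a y" if "x \<in> A" "y \<in> A" using a that xy(3) unfolding proper_colouring_def by blast
      show "c x \<noteq> c y"
      proof (cases "x \<in> A")
        case True
        show ?thesis
        proof (cases "y \<in> A")
          case True then show ?thesis using \<open>x \<in> A\<close> aa by (simp add: c_def)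
        next
          case False then show ?thesis using \<open>x \<in> A\<close> \<open>\<And>x. x \<in> A \<Longrightarrow> a x < chi A\<close>[of x] by (simp add: c_def)
        qed
      next
        case False
        show ?thesis
        proof (cases "y \<in> A")
          case True then show ?thesis using False \<open>\<And>x. x \<in> A \<Longrightarrow> a x < chi A\<close>[of y] by (simp add: c_def)
        next
          case False then show ?thesis using \<open>x \<notin> A\<close> xy bb by (simp add: c_def)
        qed
      qed
    qed
  qed
  then show ?thesis by (rule proper_chi)
qed

lemma chi_indep_le1: assumes "indep I" shows "chi I \<le> 1"
proof -
  have "proper_colouring I E 1 (\<lambda>_. 0)" using assms unfolding proper_colouring_def indep_def by auto
  then show ?thesis by (rule proper_chi)
qed

lemma chi_join:
  assumes "finite A" "finite B" "A \<inter> B = {}" "\<forall>a\<in>A. \<forall>b\<in>B. E a b"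
  shows "chi A + chi B \<le> chi (A \<union> B)"
proof -
  obtain c where c: "proper_colouring (A \<union> B) E (chi (A \<union> B)) c" using chi_opt assms by blast
  have pa: "prop_on A c" "prop_on B c" using proper_prop[OF c] unfolding prop_on_def by auto
  have disj: "c ` A \<inter> c ` B = {}"
  proof (rule ccontr)
    assume "c ` A \<inter> c ` B \<noteq> {}"
    then obtain x y where "x \<in> A" "y \<in> B" "c x = c y" by auto
    moreover have "E x y" using assms(4) \<open>x \<in> A\<close> \<open>y \<in> B\<close> by auto
    ultimately show False using c \<open>x \<in> A\<close> \<open>y \<in> B\<close> unfolding proper_colouring_def by auto
  qed
  have "chi A + chi B \<le> card (c ` A) + card (c ` B)"
    using chi_le_card_image[OF assms(1) pa(1)] chi_le_card_image[OF assms(2) pa(2)] by simp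
  also have "\<dots> = card (c ` (A \<union> B))"
    using disj assms(1,2) by (simp add: image_Un card_Un_disjoint)
  also have "\<dots> \<le> chi (A \<union> B)"
  proof -
    have "c ` (A \<union> B) \<subseteq> {..<chi (A \<union> B)}" using c unfolding proper_colouring_def by auto
    then have "card (c ` (A \<union> B)) \<le> card {..<chi (A \<union> B)}" by (rule card_mono[rotated]) simp
    then show ?thesis by simp
  qed
  finally show ?thesis .
qed

end
context sg begin

lemma clq_set_fin: assumes "finite S" shows "finite {card K | K. is_clique S E K}"
proof -
  have "{card K | K. is_clique S E K} \<subseteq> {..card S}"
  proof
    fix x assume "x \<in> {card K | K. is_clique S E K}"
    then obtain K where "x = card K" "K \<subseteq> S" by (auto simp: is_clique_def)
    then show "x \<in> {..card S}" using assms card_mono by auto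
  qed
  then show ?thesis using finite_subset by blast
qed

lemma om_ge: assumes "finite S" "is_clique S E K" shows "card K \<le> om S"
  unfolding om_def clique_number_def using clq_set_fin[OF assms(1)] assms(2) by (intro Max_ge) auto

lemma om_ex: assumes "finite S" shows "\<exists>K. is_clique S E K \<and> card K = om S"
proof -
  have "is_clique S E {}" by (simp add: is_clique_def)
  then have "{card K | K. is_clique S E K} \<noteq> {}" by blast
  from Max_in[OF clq_set_fin[OF assms] this] show ?thesis unfolding om_def clique_number_def by auto
qed

lemma om_mono: assumes "finite S" "T \<subseteq> S" shows "om T \<le> om S"
proof -
  have "finite T" using assms finite_subset by blast
  obtain K where K: "is_clique T E K" "card K = om T" using om_ex[OF \<open>finite T\<close>] by blast
  then have "is_clique S E K" using assms(2) by (auto simp: is_clique_def)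
  then have "card K \<le> om S" by (rule om_ge[OF assms(1)])
  then show ?thesis using K(2) by simp
qed

lemma om_pos: assumes "finite S" "v \<in> S" shows "1 \<le> om S"
proof -
  have "is_clique S E {v}" using assms by (auto simp: is_clique_def)
  then have "card {v} \<le> om S" by (rule om_ge[OF assms(1)])
  then show ?thesis by simp
qed

lemma om_join:
  assumes "finite A" "finite B" "A \<inter> B = {}" "\<forall>a\<in>A. \<forall>b\<in>B. E a b"
  shows "om A + om B \<le> om (A \<union> B)"
proof -
  obtain K where K: "is_clique A E K" "card K = om A" using om_ex[OF assms(1)] by blast
  obtain L where L: "is_clique B E L" "card L = om B" using om_ex[OF assms(2)] by blast
  have "is_clique (A \<union> B) E (K \<union> L)" unfolding is_clique_def
  proof (intro conjI ballI impI)
    show "K \<union> L \<subseteq> A \<union> B" using K L by (auto simp: is_clique_def)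
    fix x y assume xy: "x \<in> K \<union> L" "y \<in> K \<union> L" "x \<noteq> y"
    show "E x y"
    proof (cases "x \<in> K")
      case True
      show ?thesis
      proof (cases "y \<in> K")
        case True then show ?thesis using \<open>x \<in> K\<close> xy K(1) by (auto simp: is_clique_def)
      next
        case False then have "y \<in> B" using xy L(1) by (auto simp: is_clique_def)
        moreover have "x \<in> A" using True K(1) by (auto simp: is_clique_def)
        ultimately show ?thesis using assms(4) by blast
      qed
    next
      case False
      then have "x \<in> L" using xy by auto
      then have xB: "x \<in> B" using L(1) by (auto simp: is_clique_def)
      show ?thesis
      proof (cases "y \<in> K")
        case True then have "y \<in> A" using K(1) by (auto simp: is_clique_def)
        then show ?thesis using assms(4) xB symE by blast
      next
        case False then show ?thesis using \<open>x \<in> L\<close> xy L(1) by (auto simp: is_clique_def)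
      qed
    qed
  qed
  then have "card (K \<union> L) \<le> om (A \<union> B)" using assms by (intro om_ge) auto
  moreover have "card (K \<union> L) = card K + card L"
    using K L assms unfolding is_clique_def
    by (intro card_Un_disjoint) (auto intro: finite_subset)
  ultimately show ?thesis using K L by simp
qed

lemma Dl_ge: assumes "finite S" "v \<in> S" shows "degree S E v \<le> Dl S"
  unfolding Dl_def max_degree_def using assms by (intro Max_ge) auto

lemma Dl_ex: assumes "finite S" "S \<noteq> {}" shows "\<exists>v\<in>S. degree S E v = Dl S"
proof -
  have "Dl S \<in> degree S E ` S" unfolding Dl_def max_degree_def using assms by (intro Max_in) auto
  then show ?thesis by auto
qed

lemma degree_mono: assumes "finite S" "T \<subseteq> S" shows "degree T E v \<le> degree S E v"
  unfolding degree_def using assms by (intro card_mono) auto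

lemma Dl_mono: assumes "finite S" "T \<subseteq> S" "T \<noteq> {}" shows "Dl T \<le> Dl S"
proof -
  have "finite T" using assms finite_subset by blast
  obtain v where "v \<in> T" "degree T E v = Dl T" using Dl_ex[OF \<open>finite T\<close> assms(3)] by blast
  then show ?thesis using degree_mono[OF assms(1,2), of v] Dl_ge[OF assms(1), of v] assms(2) by auto
qed

lemma Dl_peel:
  assumes "finite S" "I \<subseteq> S" "S - I \<noteq> {}" "\<forall>v\<in>S - I. \<exists>u\<in>I. E v u"
  shows "Dl (S - I) + 1 \<le> Dl S"
proof -
  obtain v where v: "v \<in> S - I" "degree (S - I) E v = Dl (S - I)" using Dl_ex[of "S - I"] assms by blast
  obtain u where u: "u \<in> I" "E v u" using assms(4) v(1) by blast
  have "{w \<in> S - I. E v w} \<subset> {w \<in> S. E v w}" using u assms(2) by auto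
  then have "degree (S - I) E v < degree S E v" unfolding degree_def using assms(1)
    by (intro psubset_card_mono) auto
  moreover have "degree S E v \<le> Dl S" using Dl_ge assms(1) v(1) by auto
  ultimately show ?thesis using v(2) by simp
qed

lemma Dl_join:
  assumes "finite A" "finite B" "A \<inter> B = {}" "\<forall>a\<in>A. \<forall>b\<in>B. E a b" "A \<noteq> {}"
  shows "Dl A + card B \<le> Dl (A \<union> B)"
proof -
  obtain v where v: "v \<in> A" "degree A E v = Dl A" using Dl_ex[OF assms(1) assms(5)] by blast
  have eq: "{w \<in> A \<union> B. E v w} = {w \<in> A. E v w} \<union> B" using v assms(4) by auto
  have "degree (A \<union> B) E v = degree A E v + card B"
    unfolding degree_def eq using assms by (intro card_Un_disjoint) auto
  moreover have "degree (A \<union> B) E v \<le> Dl (A \<union> B)" using Dl_ge assms v by auto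
  ultimately show ?thesis using v by simp
qed

lemma card_split_deg:
  assumes "finite S" "v \<in> S"
  shows "card S = 1 + degree S E v + card {u \<in> S. u \<noteq> v \<and> \<not> E v u}"
proof -
  have "S = {v} \<union> ({u \<in> S. E v u} \<union> {u \<in> S. u \<noteq> v \<and> \<not> E v u})" using assms(2) by auto
  moreover have "card ({u \<in> S. E v u} \<union> {u \<in> S. u \<noteq> v \<and> \<not> E v u})
      = card {u \<in> S. E v u} + card {u \<in> S. u \<noteq> v \<and> \<not> E v u}"
    using assms by (intro card_Un_disjoint) auto
  moreover have "card ({v} \<union> ({u \<in> S. E v u} \<union> {u \<in> S. u \<noteq> v \<and> \<not> E v u}))
      = 1 + card ({u \<in> S. E v u} \<union> {u \<in> S. u \<noteq> v \<and> \<not> E v u})"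
    using assms irrE by (subst card_Un_disjoint) auto
  ultimately show ?thesis unfolding degree_def by simp
qed

end
context sg begin

lemma prop_onI: "(\<And>x y. x \<in> S \<Longrightarrow> y \<in> S \<Longrightarrow> x \<noteq> y \<Longrightarrow> c x = c y \<Longrightarrow> \<not> E x y) \<Longrightarrow> prop_on S c"
  unfolding prop_on_def using irrE by blast

lemma recolor3:
  assumes pc: "prop_on S c" and S: "z \<in> S" "w \<in> S" "p \<in> S" "u \<in> S"
    and d: "z \<noteq> w" "z \<noteq> p" "z \<noteq> u" "w \<noteq> p" "w \<noteq> u" "p \<noteq> u"
    and cp: "c p = c w"
    and fz: "\<forall>y\<in>S. c y = c z \<longrightarrow> y = z" and fu: "\<forall>y\<in>S. c y = c u \<longrightarrow> y = u"
    and fw: "\<forall>y\<in>S. c y = c w \<longrightarrow> y = w \<or> y = p"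
    and n1: "\<not> E z w" and n2: "\<not> E p u"
  shows "prop_on S (c(z := c w, p := c u)) \<and> (c(z := c w, p := c u)) ` S \<subseteq> c ` S - {c z}"
proof
  let ?c = "c(z := c w, p := c u)"
  have cwu: "c w \<noteq> c u" using fu S d by auto
  have czw: "c z \<noteq> c w" using fz S d by auto
  have czu: "c z \<noteq> c u" using fz S d by auto
  have cz: "?c z = c w" using d by simp
  have cpp: "?c p = c u" by simp
  have co: "?c x = c x" if "x \<noteq> z" "x \<noteq> p" for x using that by simp
  show "prop_on S ?c"
  proof (rule prop_onI)
    fix x y assume xy: "x \<in> S" "y \<in> S" "x \<noteq> y" "?c x = ?c y"
    have sym_goal: "\<not> E x y" if "\<not> E y x" using that symE by blast
    consider "x = z" | "x = p" | "x \<noteq> z" "x \<noteq> p" by blast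
    then show "\<not> E x y"
    proof cases
      case 1
      then have "?c y = c w" using xy cz by simp
      then have "y = w" using xy 1 fw co[of y] cpp cwu by (cases "y = p") auto
      then show ?thesis using 1 n1 by simp
    next
      case 2
      then have "?c y = c u" using xy cpp by simp
      then have "y = u" using xy 2 fu co[of y] cz cwu by (cases "y = z") auto
      then show ?thesis using 2 n2 by simp
    next
      case 3
      then have cx: "?c x = c x" using co by simp
      consider "y = z" | "y = p" | "y \<noteq> z" "y \<noteq> p" by blast
      then show ?thesis
      proof cases
        case 1
        then have "c x = c w" using xy cx cz by simp
        then have "x = w" using fw xy 3 by auto
        then show ?thesis using 1 n1 symE by blast
      next
        case 2
        then have "c x = c u" using xy cx cpp by simp
        then have "x = u" using fu xy by auto
        then show ?thesis using 2 n2 symE by blast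
      next
        case 4: 3
        then have "c x = c y" using xy cx co by simp
        then show ?thesis using pc xy unfolding prop_on_def by auto
      qed
    qed
  qed
  show "?c ` S \<subseteq> c ` S - {c z}"
  proof
    fix t assume "t \<in> ?c ` S"
    then obtain x where x: "x \<in> S" "t = ?c x" by auto
    consider "x = z" | "x = p" | "x \<noteq> z" "x \<noteq> p" by blast
    then show "t \<in> c ` S - {c z}"
    proof cases
      case 1 then show ?thesis using x S czw cz by auto
    next
      case 2 then show ?thesis using x S czu d by simp
    next
      case 3 then have "c x \<noteq> c z" using fz x by auto
      then show ?thesis using x 3 by simp
    qed
  qed
qed

lemma recolor5:
  assumes pc: "prop_on S c" and S: "z \<in> S" "w \<in> S" "p \<in> S" "q \<in> S" "r \<in> S" "u \<in> S"
    and d: "z \<noteq> u"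
    and cp: "c p = c w" and cr: "c r = c q" and cwq: "c w \<noteq> c q"
    and fz: "\<forall>y\<in>S. c y = c z \<longrightarrow> y = z" and fu: "\<forall>y\<in>S. c y = c u \<longrightarrow> y = u"
    and fw: "\<forall>y\<in>S. c y = c w \<longrightarrow> y = w \<or> y = p"
    and fq: "\<forall>y\<in>S. c y = c q \<longrightarrow> y = q \<or> y = r"
    and dwp: "w \<noteq> p" and dqr: "q \<noteq> r"
    and n1: "\<not> E z w" and n2: "\<not> E p r" and n3: "\<not> E q u"
  shows "prop_on S (c(z := c w, p := c q, q := c u)) \<and> (c(z := c w, p := c q, q := c u)) ` S \<subseteq> c ` S - {c z}"
proof
  let ?c = "c(z := c w, p := c q, q := c u)"
  have czw: "c z \<noteq> c w"
  proof
    assume h: "c z = c w"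
    then have "w = z" using fz S by auto
    moreover have "p = z" using fz S h cp by auto
    ultimately show False using dwp by simp
  qed
  have czq: "c z \<noteq> c q"
  proof
    assume h: "c z = c q"
    then have "q = z" using fz S by auto
    moreover have "r = z" using fz S h cr by auto
    ultimately show False using dqr by simp
  qed
  have czu: "c z \<noteq> c u" using fz S d by auto
  have cwu: "c w \<noteq> c u"
  proof
    assume h: "c w = c u"
    then have "w = u" using fu S by auto
    moreover have "p = u" using fu S h cp by auto
    ultimately show False using dwp by simp
  qed
  have cqu: "c q \<noteq> c u"
  proof
    assume h: "c q = c u"
    then have "q = u" using fu S by auto
    moreover have "r = u" using fu S h cr by auto
    ultimately show False using dqr by simp
  qed
  have zp: "z \<noteq> p" using czw cp by auto
  have zq: "z \<noteq> q" using czq by auto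
  have pq: "p \<noteq> q" using cp cwq by auto
  have cz: "?c z = c w" using zp zq by simp
  have cpp: "?c p = c q" using pq by simp
  have cqq: "?c q = c u" by simp
  have co: "?c x = c x" if "x \<noteq> z" "x \<noteq> p" "x \<noteq> q" for x using that by simp
  have cls: "(?c x = c w \<longrightarrow> x = z \<or> x = w) \<and> (?c x = c q \<longrightarrow> x = p \<or> x = r) \<and> (?c x = c u \<longrightarrow> x = q \<or> x = u)
     \<and> ?c x \<noteq> c z \<and> (x \<notin> {z,p,q,w,r,u} \<longrightarrow> ?c x = c x)" if "x \<in> S" for x
  proof -
    consider "x = z" | "x = p" | "x = q" | "x \<noteq> z" "x \<noteq> p" "x \<noteq> q" by blast
    then show ?thesis
    proof cases
      case 1 then show ?thesis using cz czw cwq cwu by auto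
    next
      case 2 then show ?thesis using cpp cwq cqu czq by auto
    next
      case 3 then show ?thesis using cqq cwu cqu czu by auto
    next
      case 4
      have "?c x = c x" using co 4 by simp
      moreover have "c x \<noteq> c z" using fz that 4 by auto
      moreover have "c x = c w \<longrightarrow> x = w" using fw that 4 by auto
      moreover have "c x = c q \<longrightarrow> x = r" using fq that 4 by auto
      moreover have "c x = c u \<longrightarrow> x = u" using fu that by auto
      ultimately show ?thesis by auto
    qed
  qed
  show "prop_on S ?c"
  proof (rule prop_onI)
    fix x y assume xy: "x \<in> S" "y \<in> S" "x \<noteq> y" "?c x = ?c y"
    consider "?c x = c w" | "?c x = c q" | "?c x = c u" | "?c x \<noteq> c w" "?c x \<noteq> c q" "?c x \<noteq> c u" by blast
    then show "\<not> E x y"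
    proof cases
      case 1
      then have "x = z \<or> x = w" "y = z \<or> y = w" using cls xy by auto
      then show ?thesis using n1 xy symE by blast
    next
      case 2
      then have "x = p \<or> x = r" "y = p \<or> y = r" using cls xy by auto
      then show ?thesis using n2 xy symE by blast
    next
      case 3
      then have "x = q \<or> x = u" "y = q \<or> y = u" using cls xy by auto
      then show ?thesis using n3 xy symE by blast
    next
      case 4
      have "x \<notin> {z,p,q}" using 4 cz cpp cqq by auto
      moreover have "y \<notin> {z,p,q}" using 4 cz cpp cqq xy(4) by auto
      ultimately have "c x = c y" using xy co by simp
      then show ?thesis using pc xy unfolding prop_on_def by auto
    qed
  qed
  show "?c ` S \<subseteq> c ` S - {c z}"
  proof
    fix t assume "t \<in> ?c ` S"
    then obtain x where x: "x \<in> S" "t = ?c x" by auto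
    have "t \<noteq> c z" using cls x by auto
    moreover have "t \<in> c ` S"
    proof -
      consider "x = z" | "x = p" | "x = q" | "x \<noteq> z" "x \<noteq> p" "x \<noteq> q" by blast
      then show ?thesis
      proof cases
        case 1 then show ?thesis using x cz S by auto
      next
        case 2 then show ?thesis using x cpp S by auto
      next
        case 3 then show ?thesis using x cqq S by auto
      next
        case 4 then show ?thesis using x co by auto
      qed
    qed
    ultimately show "t \<in> c ` S - {c z}" by simp
  qed
qed

end
context sg begin

definition alpha2 where
  "alpha2 S \<longleftrightarrow> (\<forall>x\<in>S. \<forall>y\<in>S. \<forall>z\<in>S. x \<noteq> y \<and> x \<noteq> z \<and> y \<noteq> z \<longrightarrow> E x y \<or> E x z \<or> E y z)"

lemma alpha2D: "alpha2 S \<Longrightarrow> x \<in> S \<Longrightarrow> y \<in> S \<Longrightarrow> z \<in> S \<Longrightarrow> x \<noteq> y \<Longrightarrow> x \<noteq> z \<Longrightarrow> y \<noteq> z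
  \<Longrightarrow> \<not> E x y \<Longrightarrow> \<not> E x z \<Longrightarrow> E y z"
  unfolding alpha2_def by blast

lemma alpha2_case:
  assumes fin: "finite S" and ne: "S \<noteq> {}" and a2: "alpha2 S"
  shows "4 * chi S \<le> 2 * om S + Dl S + card S + 1"
proof -
  obtain c where c: "proper_colouring S E (chi S) c" using chi_opt fin by blast
  define k where "k = chi S"
  have pc: "prop_on S c" using proper_prop[OF c] .
  have k1: "k \<ge> 1" using chi_pos fin ne k_def by auto
  have imgk: "card (c ` S) = k"
  proof -
    have "c ` S \<subseteq> {..<k}" using c k_def unfolding proper_colouring_def by auto
    then have "card (c ` S) \<le> k" using card_mono[of "{..<k}"] by fastforce
    moreover have "k \<le> card (c ` S)" using chi_le_card_image[OF fin pc] k_def by simp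
    ultimately show ?thesis by simp
  qed
  have better: False if "prop_on S c'" "col \<in> c ` S" "c' ` S \<subseteq> c ` S - {col}" for c' col
  proof -
    have "k \<le> card (c' ` S)" using chi_le_card_image[OF fin that(1)] k_def by simp
    also have "\<dots> \<le> card (c ` S - {col})" using that(3) fin by (intro card_mono) auto
    also have "\<dots> = k - 1" using that(2) imgk fin by simp
    finally show False using k1 by simp
  qed
  have nadj_col: "\<not> E x y" if "x \<in> S" "y \<in> S" "c x = c y" for x y
    using pc that unfolding prop_on_def by auto
  define U where "U = {x \<in> S. \<forall>y\<in>S. c y = c x \<longrightarrow> y = x}"
  define P where "P = S - U"
  have US: "U \<subseteq> S" and PS: "P \<subseteq> S" unfolding U_def P_def by auto
  have fiber2: "\<exists>y. y \<in> S \<and> y \<noteq> x \<and> c y = c x" if "x \<in> P" for x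
    using that unfolding P_def U_def by auto
  define pt where "pt x = (SOME y. y \<in> S \<and> y \<noteq> x \<and> c y = c x)" for x
  have pt: "pt x \<in> S" "pt x \<noteq> x" "c (pt x) = c x" if "x \<in> P" for x
    using someI_ex[OF fiber2[OF that]] unfolding pt_def by auto
  have ptonly: "y = x \<or> y = pt x" if "x \<in> P" "y \<in> S" "c y = c x" for x y
  proof (rule ccontr)
    assume "\<not> (y = x \<or> y = pt x)"
    moreover have "x \<in> S" using that PS by auto
    moreover have "\<not> E x y" "\<not> E x (pt x)" "\<not> E y (pt x)"
      using nadj_col pt[OF that(1)] that \<open>x \<in> S\<close> by auto
    ultimately show False using alpha2D[OF a2 \<open>x \<in> S\<close> that(2) pt(1)[OF that(1)]] pt[OF that(1)] by auto
  qed
  have ptP: "pt x \<in> P" if "x \<in> P" for x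
    using pt[OF that] that unfolding P_def U_def by auto
  have Ucol: "y = u" if "u \<in> U" "y \<in> S" "c y = c u" for u y
    using that unfolding U_def by auto
  have cardS: "card S = card U + card P" unfolding P_def using fin US
    by (metis card_Diff_subset finite_subset le_add_diff_inverse card_mono)
  have imgUP: "c ` S = c ` U \<union> c ` P" unfolding P_def using US by auto
  have disjUP: "c ` U \<inter> c ` P = {}"
  proof -
    have "False" if "u \<in> U" "p \<in> P" "c u = c p" for u p
      using Ucol[OF that(1), of p] that PS unfolding P_def by auto
    then show ?thesis by blast
  qed
  have cP: "card P = 2 * card (c ` P)"
  proof -
    have finP: "finite P" using fin PS finite_subset by blast
    have Pun: "P = (\<Union>i\<in>c ` P. {x \<in> P. c x = i})" by auto
    have "card P = (\<Sum>i\<in>c ` P. card {x \<in> P. c x = i})"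
      by (subst Pun, rule card_UN_disjoint) (use finP in auto)
    also have "\<dots> = (\<Sum>i\<in>c ` P. 2)"
    proof (rule sum.cong[OF refl])
      fix i assume "i \<in> c ` P"
      then obtain x where x: "x \<in> P" "i = c x" by auto
      have "{y \<in> P. c y = i} = {x, pt x}"
        using x ptonly[OF x(1)] pt[OF x(1)] ptP[OF x(1)] PS by auto
      then show "card {y \<in> P. c y = i} = 2" using pt(2)[OF x(1)] by auto
    qed
    finally show ?thesis by simp
  qed
  have twok: "2 * k \<le> card S + card U"
  proof -
    have "k = card (c ` U) + card (c ` P)"
      using imgk imgUP disjUP fin US PS by (metis card_Un_disjoint finite_imageI finite_subset)
    moreover have "card (c ` U) \<le> card U" using fin US finite_subset card_image_le by blast
    ultimately show ?thesis using cardS cP by linarith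
  qed
  have Uclq: "E u v" if "u \<in> U" "v \<in> U" "u \<noteq> v" for u v
  proof (rule ccontr)
    assume nE: "\<not> E u v"
    define c' where "c' = c(v := c u)"
    have uS: "u \<in> S" "v \<in> S" using that US by auto
    have "prop_on S c'" unfolding prop_on_def
    proof (intro ballI impI)
      fix x y assume xy: "x \<in> S" "y \<in> S" "E x y"
      have "c x \<noteq> c y" using pc xy unfolding prop_on_def by auto
      show "c' x \<noteq> c' y"
      proof (cases "x = v")
        case True
        then have "y \<noteq> v" using xy irrE by auto
        moreover have "c y \<noteq> c u" using Ucol[OF that(1), of y] xy True nE symE by auto
        ultimately show ?thesis using True unfolding c'_def by simp
      next
        case False
        show ?thesis
        proof (cases "y = v")
          case True
          have "c x \<noteq> c u" using Ucol[OF that(1), of x] xy True nE by auto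
          then show ?thesis using True False unfolding c'_def by simp
        next
          case False
          then show ?thesis using \<open>x \<noteq> v\<close> \<open>c x \<noteq> c y\<close> unfolding c'_def by simp
        qed
      qed
    qed
    moreover have "c v \<in> c ` S" using uS by auto
    moreover have "c' ` S \<subseteq> c ` S - {c v}"
    proof
      fix z assume "z \<in> c' ` S"
      then obtain x where x: "x \<in> S" "z = c' x" by auto
      show "z \<in> c ` S - {c v}"
      proof (cases "x = v")
        case True then show ?thesis using x uS Ucol[OF that(2), of u] that(3) unfolding c'_def by auto
      next
        case False then show ?thesis using x Ucol[OF that(2), of x] unfolding c'_def by auto
      qed
    qed
    ultimately show False using better by blast
  qed
  show ?thesis
  proof (cases "U = {}")
    case True
    obtain v where v: "v \<in> S" using ne by auto
    define N where "N = {u \<in> S. u \<noteq> v \<and> \<not> E v u}"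
    have "is_clique S E N" unfolding is_clique_def
    proof (intro conjI ballI impI)
      show "N \<subseteq> S" unfolding N_def by auto
      fix a b assume "a \<in> N" "b \<in> N" "a \<noteq> b"
      then show "E a b" using alpha2D[OF a2 v, of a b] unfolding N_def by auto
    qed
    then have "card N \<le> om S" using om_ge fin by blast
    moreover have "card S = 1 + degree S E v + card N" using card_split_deg[OF fin v] N_def by simp
    moreover have "degree S E v \<le> Dl S" using Dl_ge fin v by blast
    moreover have "2 * k \<le> card S" using twok True by simp
    ultimately show ?thesis using k_def by linarith
  next
    case False
    then obtain z where zU: "z \<in> U" by auto
    have zS: "z \<in> S" using zU US by auto
    define N where "N = {u \<in> S. u \<noteq> z \<and> \<not> E z u}"
    have NP: "N \<subseteq> P"
    proof
      fix w assume w: "w \<in> N"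
      have "w \<notin> U" using Uclq[OF zU] w unfolding N_def by auto
      then show "w \<in> P" using w unfolding N_def P_def by auto
    qed
    have Nclq: "E a b" if "a \<in> N" "b \<in> N" "a \<noteq> b" for a b
      using alpha2D[OF a2 zS, of a b] that unfolding N_def by auto
    have ptz: "E z (pt w)" if "w \<in> N" for w
    proof (rule ccontr)
      assume "\<not> E z (pt w)"
      moreover have "w \<in> P" using NP that by auto
      moreover have "pt w \<noteq> z" using ptP[OF \<open>w \<in> P\<close>] zU unfolding P_def by auto
      moreover have "w \<in> S" "w \<noteq> z" "\<not> E z w" using that unfolding N_def by auto
      moreover have "\<not> E w (pt w)" using nadj_col[of w "pt w"] pt[OF \<open>w \<in> P\<close>] \<open>w \<in> S\<close> by auto
      ultimately show False using alpha2D[OF a2 zS, of w "pt w"] pt[OF \<open>w \<in> P\<close>] by auto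
    qed
    have zP: "z \<notin> P" using zU unfolding P_def by auto
    have ptU: "E u (pt w)" if w: "w \<in> N" and u: "u \<in> U" "u \<noteq> z" for w u
    proof (rule ccontr)
      assume n: "\<not> E u (pt w)"
      have wP: "w \<in> P" using NP w by auto
      have wS: "w \<in> S" and uS: "u \<in> S" using wP PS u US by auto
      have uP: "u \<notin> P" using u unfolding P_def by auto
      have r: "prop_on S (c(z := c w, pt w := c u)) \<and> (c(z := c w, pt w := c u)) ` S \<subseteq> c ` S - {c z}"
      proof (rule recolor3[OF pc zS wS pt(1)[OF wP] uS])
        show "z \<noteq> w" using w unfolding N_def by auto
        show "z \<noteq> pt w" using zP ptP[OF wP] by auto
        show "z \<noteq> u" using u by auto
        show "w \<noteq> pt w" using pt(2)[OF wP] by auto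
        show "w \<noteq> u" using wP uP by auto
        show "pt w \<noteq> u" using ptP[OF wP] uP by auto
        show "c (pt w) = c w" using pt(3)[OF wP] .
        show "\<forall>y\<in>S. c y = c z \<longrightarrow> y = z" using Ucol[OF zU] by auto
        show "\<forall>y\<in>S. c y = c u \<longrightarrow> y = u" using Ucol[OF u(1)] by auto
        show "\<forall>y\<in>S. c y = c w \<longrightarrow> y = w \<or> y = pt w" using ptonly[OF wP] by auto
        show "\<not> E z w" using w unfolding N_def by auto
        show "\<not> E (pt w) u" using n symE by blast
      qed
      then show False using better[of _ "c z"] zS by blast
    qed
    have cwq: "c w \<noteq> c q" if "w \<in> N" "q \<in> N" "w \<noteq> q" for w q
    proof
      assume h: "c w = c q"
      have wP: "w \<in> P" using NP that by auto
      have "q = w \<or> q = pt w" using ptonly[OF wP, of q] h that unfolding N_def by auto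
      then have "q = pt w" using that by auto
      then show False using ptz[OF that(1)] that(2) unfolding N_def by auto
    qed
    have ptM: "E (pt q) (pt w)" if q: "q \<in> N" and w: "w \<in> N" and qw: "q \<noteq> w"
      and u: "u \<in> U" "u \<noteq> z" "\<not> E u q" for q w u
    proof (rule ccontr)
      assume n: "\<not> E (pt q) (pt w)"
      have wP: "w \<in> P" and qP: "q \<in> P" using NP w q by auto
      have wS: "w \<in> S" and uS: "u \<in> S" and qS: "q \<in> S" using wP qP PS u US by auto
      have r: "prop_on S (c(z := c w, pt w := c q, q := c u)) \<and> (c(z := c w, pt w := c q, q := c u)) ` S \<subseteq> c ` S - {c z}"
      proof (rule recolor5[OF pc zS wS pt(1)[OF wP] qS pt(1)[OF qP] uS])
        show "z \<noteq> u" using u by auto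
        show "c (pt w) = c w" using pt(3)[OF wP] .
        show "c (pt q) = c q" using pt(3)[OF qP] .
        show "c w \<noteq> c q" using cwq w q qw by auto
        show "\<forall>y\<in>S. c y = c z \<longrightarrow> y = z" using Ucol[OF zU] by auto
        show "\<forall>y\<in>S. c y = c u \<longrightarrow> y = u" using Ucol[OF u(1)] by auto
        show "\<forall>y\<in>S. c y = c w \<longrightarrow> y = w \<or> y = pt w" using ptonly[OF wP] by auto
        show "\<forall>y\<in>S. c y = c q \<longrightarrow> y = q \<or> y = pt q" using ptonly[OF qP] by auto
        show "w \<noteq> pt w" using pt(2)[OF wP] by auto
        show "q \<noteq> pt q" using pt(2)[OF qP] by auto
        show "\<not> E z w" using w unfolding N_def by auto
        show "\<not> E (pt w) (pt q)" using n symE by blast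
        show "\<not> E q u" using u symE by blast
      qed
      then show False using better[of _ "c z"] zS by blast
    qed
    have ptinj: "inj_on pt N"
    proof (rule inj_onI)
      fix a b assume ab: "a \<in> N" "b \<in> N" "pt a = pt b"
      show "a = b"
      proof (rule ccontr)
        assume "a \<noteq> b"
        moreover have "c a = c b" using pt(3) NP ab by (metis subsetD)
        ultimately show False using cwq ab by blast
      qed
    qed
    define Mlt where "Mlt = {w \<in> N. \<exists>u\<in>U. u \<noteq> z \<and> \<not> E u w}"
    define Sgl where "Sgl = N - Mlt"
    have finN: "finite N" using fin unfolding N_def by auto
    have finU: "finite U" using fin US finite_subset by blast
    have MN: "Mlt \<subseteq> N" unfolding Mlt_def by auto
    have cardN: "card N = card Mlt + card Sgl"
      unfolding Sgl_def using MN finN by (metis card_Diff_subset card_mono finite_subset le_add_diff_inverse)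
    define Ia where "Ia = (U - {z}) \<union> Sgl"
    have Ia_clq: "is_clique S E Ia" unfolding is_clique_def
    proof (intro conjI ballI impI)
      show "Ia \<subseteq> S" unfolding Ia_def Sgl_def N_def using US by auto
      fix x y assume xy: "x \<in> Ia" "y \<in> Ia" "x \<noteq> y"
      consider "x \<in> U" "y \<in> U" | "x \<in> U - {z}" "y \<in> Sgl" | "x \<in> Sgl" "y \<in> U - {z}" | "x \<in> Sgl" "y \<in> Sgl"
        using xy unfolding Ia_def by auto
      then show "E x y"
      proof cases
        case 1 then show ?thesis using Uclq xy by auto
      next
        case 2 then show ?thesis using xy unfolding Ia_def Sgl_def Mlt_def by auto
      next
        case 3 then have "E y x" using xy unfolding Ia_def Sgl_def Mlt_def by auto
        then show ?thesis using symE by blast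
      next
        case 4 then show ?thesis using Nclq xy unfolding Sgl_def by auto
      qed
    qed
    have cardIa: "card Ia = (card U - 1) + card Sgl"
    proof -
      have "(U - {z}) \<inter> Sgl = {}" using NP unfolding Sgl_def P_def by auto
      moreover have "finite Sgl" using finN unfolding Sgl_def by auto
      ultimately have "card Ia = card (U - {z}) + card Sgl" unfolding Ia_def using finU
        by (intro card_Un_disjoint) auto
      then show ?thesis using zU finU by simp
    qed
    define B where "B = Mlt \<union> (if Sgl = {} then {} else {SOME s. s \<in> Sgl})"
    have BN: "B \<subseteq> N" unfolding B_def Sgl_def using MN by (auto intro: someI2_ex)
    have Bsub: "a \<in> Mlt \<or> b \<in> Mlt" if "a \<in> B" "b \<in> B" "a \<noteq> b" for a b
      using that unfolding B_def by (auto split: if_splits)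
    have cardB: "card B = card Mlt + (if Sgl = {} then 0 else 1)"
    proof (cases "Sgl = {}")
      case True then show ?thesis unfolding B_def by simp
    next
      case False
      then have "(SOME s. s \<in> Sgl) \<in> Sgl" by (auto intro: someI2_ex)
      then have "(SOME s. s \<in> Sgl) \<notin> Mlt" unfolding Sgl_def by auto
      moreover have "finite Mlt" using finN MN finite_subset by blast
      ultimately show ?thesis unfolding B_def using False by simp
    qed
    define Ib where "Ib = U \<union> pt ` B"
    have ptBP: "pt ` B \<subseteq> P" using BN NP ptP by auto
    have cardIb: "card Ib = card U + card B"
    proof -
      have "U \<inter> pt ` B = {}" using ptBP unfolding P_def by auto
      moreover have "finite B" using BN finN finite_subset by auto
      ultimately have "card Ib = card U + card (pt ` B)" unfolding Ib_def using finU
        by (intro card_Un_disjoint) auto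
      moreover have "card (pt ` B) = card B" using ptinj BN inj_on_subset card_image by blast
      ultimately show ?thesis by simp
    qed
    have Ib_clq: "is_clique S E Ib" unfolding is_clique_def
    proof (intro conjI ballI impI)
      show "Ib \<subseteq> S" unfolding Ib_def using US ptBP PS by auto
      have UB: "E u (pt b)" if "u \<in> U" "b \<in> B" for u b
      proof (cases "u = z")
        case True then show ?thesis using ptz BN that by auto
      next
        case False then show ?thesis using ptU BN that by auto
      qed
      fix x y assume xy: "x \<in> Ib" "y \<in> Ib" "x \<noteq> y"
      consider "x \<in> U" "y \<in> U" | a where "x \<in> U" "a \<in> B" "y = pt a" | a where "y \<in> U" "a \<in> B" "x = pt a"
        | a b where "a \<in> B" "b \<in> B" "x = pt a" "y = pt b"
        using xy unfolding Ib_def by auto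
      then show "E x y"
      proof cases
        case 1 then show ?thesis using Uclq xy by auto
      next
        case 2 then show ?thesis using UB by auto
      next
        case 3 then show ?thesis using UB symE by blast
      next
        case (4 a b)
        then have ab: "a \<noteq> b" using xy by auto
        show ?thesis
        proof (cases "a \<in> Mlt")
          case True
          then obtain u where "u \<in> U" "u \<noteq> z" "\<not> E u a" unfolding Mlt_def by auto
          then show ?thesis using ptM[of a b u] True 4 ab BN MN by auto
        next
          case False
          then have "b \<in> Mlt" using Bsub 4 ab by blast
          then obtain u where "u \<in> U" "u \<noteq> z" "\<not> E u b" unfolding Mlt_def by auto
          then have "E (pt b) (pt a)" using ptM[of b a u] \<open>b \<in> Mlt\<close> 4 ab BN MN by auto
          then show ?thesis using 4 symE by blast
        qed
      qed
    qed
    have oa: "card Ia \<le> om S" using om_ge[OF fin Ia_clq] .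
    have ob: "card Ib \<le> om S" using om_ge[OF fin Ib_clq] .
    have dU: "card U \<ge> 1" using zU finU by (metis One_nat_def Suc_leI card_gt_0_iff empty_iff)
    have key: "2 * card U + card N \<le> 2 * om S"
    proof (cases "Sgl = {}")
      case True then show ?thesis using ob cardIb cardB cardN by simp
    next
      case False then show ?thesis using oa ob cardIa cardIb cardB cardN dU by simp
    qed
    have "card S = 1 + degree S E z + card N" using card_split_deg[OF fin zS] N_def by simp
    moreover have "degree S E z \<le> Dl S" using Dl_ge fin zS by blast
    ultimately show ?thesis using twok key k_def by linarith
  qed
qed

end
context sg begin

lemma indep_max_ext:
  assumes fin: "finite S" and CS: "C \<subseteq> S" and ic: "indep C"
  shows "\<exists>I. C \<subseteq> I \<and> I \<subseteq> S \<and> indep I \<and> (\<forall>v\<in>S - I. \<exists>u\<in>I. E v u)"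
proof -
  define F where "F = {T. C \<subseteq> T \<and> T \<subseteq> S \<and> indep T}"
  have finF: "finite F" unfolding F_def using fin by (rule rev_finite_subset[OF finite_Pow_iff[THEN iffD2]]) auto
  have "C \<in> F" unfolding F_def using CS ic by auto
  then have neF: "card ` F \<noteq> {}" by auto
  obtain I where I: "I \<in> F" "card I = Max (card ` F)" using Max_in[OF finite_imageI[OF finF] neF] by auto
  have maxI: "card T \<le> card I" if "T \<in> F" for T using I(2) finF that by (simp add: Max_ge)
  have "\<forall>v\<in>S - I. \<exists>u\<in>I. E v u"
  proof (rule ccontr)
    assume "\<not> (\<forall>v\<in>S - I. \<exists>u\<in>I. E v u)"
    then obtain v where v: "v \<in> S" "v \<notin> I" "\<forall>u\<in>I. \<not> E v u" by auto
    have "insert v I \<in> F" using I(1) v symE irrE unfolding F_def indep_def by blast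
    then have "card (insert v I) \<le> card I" using maxI by blast
    moreover have "finite I" using I(1) fin unfolding F_def using finite_subset by blast
    ultimately show False using v(2) by simp
  qed
  then show ?thesis using I(1) unfolding F_def by blast
qed

lemma peel:
  assumes fin: "finite S" and IS: "I \<subseteq> S" and ii: "indep I" and mx: "\<forall>v\<in>S - I. \<exists>u\<in>I. E v u"
    and ne: "S - I \<noteq> {}"
  shows "chi S \<le> chi (S - I) + 1" "om (S - I) \<le> om S" "Dl (S - I) + 1 \<le> Dl S" "card S = card (S - I) + card I"
proof -
  have "chi S = chi ((S - I) \<union> I)" using IS by (simp add: Un_absorb2)
  also have "\<dots> \<le> chi (S - I) + chi I" using fin IS finite_subset by (intro chi_union) auto
  finally show "chi S \<le> chi (S - I) + 1" using chi_indep_le1[OF ii] by simp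
  show "om (S - I) \<le> om S" using om_mono fin by blast
  show "Dl (S - I) + 1 \<le> Dl S" using Dl_peel[OF fin IS ne mx] .
  show "card S = card (S - I) + card I" using fin IS
    by (metis card_Diff_subset card_mono finite_subset le_add_diff_inverse2)
qed

lemma RH:
  assumes "finite S" "S \<noteq> {}" "Y \<subseteq> S"
  shows "4 * chi S + card Y \<le> 2 * om S + Dl S + card S + 1 + 3 * chi Y"
  using assms
proof (induction "card S" arbitrary: S Y rule: less_induct)
  case less
  note fin = less.prems(1) and ne = less.prems(2) and YS = less.prems(3)
  have finY: "finite Y" using fin YS finite_subset by blast
  show ?case
  proof (cases "Y = {}")
    case False
    obtain c where c: "proper_colouring Y E (chi Y) c" using chi_opt finY by blast
    define k where "k = chi Y"
    have k1: "k \<ge> 1" using chi_pos finY False k_def by auto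
    define C where "C = {y \<in> Y. c y = k - 1}"
    have Cne: "C \<noteq> {}"
    proof
      assume "C = {}"
      then have "proper_colouring Y E (k - 1) c" using c k_def unfolding proper_colouring_def C_def
        by (auto simp: less_Suc_eq) (metis One_nat_def Suc_pred' k1 less_Suc_eq lessThan_iff subsetD image_eqI le_eq_less_or_eq not_le zero_less_one order_less_le_trans)
      then have "k \<le> k - 1" using proper_chi k_def by blast
      then show False using k1 by simp
    qed
    have Cind: "indep C" unfolding indep_def
    proof (intro ballI)
      fix x y assume "x \<in> C" "y \<in> C"
      then have "x \<in> Y" "y \<in> Y" "c x = c y" unfolding C_def by auto
      then show "\<not> E x y" using c unfolding proper_colouring_def by auto
    qed
    have YC: "chi (Y - C) \<le> k - 1"
    proof -
      have "proper_colouring (Y - C) E (k - 1) c" using c k_def unfolding proper_colouring_def C_def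
        by (auto simp: less_Suc_eq)
      then show ?thesis using proper_chi by blast
    qed
    have CS: "C \<subseteq> S" using YS unfolding C_def by auto
    obtain I where I: "C \<subseteq> I" "I \<subseteq> S" "indep I" "\<forall>v\<in>S - I. \<exists>u\<in>I. E v u"
      using indep_max_ext[OF fin CS Cind] by blast
    have chiY': "chi (Y - I) + 1 \<le> chi Y"
    proof -
      have "chi (Y - I) \<le> chi (Y - C)" using chi_mono[of "Y - C" "Y - I"] finY I(1) by auto
      then show ?thesis using YC k1 k_def by linarith
    qed
    have cardY: "card Y \<le> card (Y - I) + card I"
    proof -
      have "Y \<subseteq> (Y - I) \<union> I" by auto
      then have "card Y \<le> card ((Y - I) \<union> I)" using finY fin I(2) finite_subset by (intro card_mono) auto
      also have "\<dots> \<le> card (Y - I) + card I" by (rule card_Un_le)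
      finally show ?thesis .
    qed
    show ?thesis
    proof (cases "S - I = {}")
      case True
      then have "S = I" using I(2) by auto
      then have "chi S \<le> 1" using chi_indep_le1 I(3) by simp
      moreover have "card Y \<le> card S" using card_mono fin YS by blast
      moreover have "chi Y \<ge> 1" using chi_pos finY False by auto
      ultimately show ?thesis by linarith
    next
      case ne': False
      have Ine: "I \<noteq> {}" using Cne I(1) by auto
      have lt: "card (S - I) < card S" using fin I(2) Ine
        by (metis Diff_subset card_Diff_subset card_gt_0_iff diff_less finite_subset subset_empty)
      have IH: "4 * chi (S - I) + card (Y - I) \<le> 2 * om (S - I) + Dl (S - I) + card (S - I) + 1 + 3 * chi (Y - I)"
      proof -
        have "Y - I \<subseteq> S - I" using YS by auto
        moreover have "finite (S - I)" using fin by auto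
        ultimately show ?thesis using less.hyps[OF lt, of "Y - I"] ne' by simp
      qed
      note p = peel[OF fin I(2) I(3) I(4) ne']
      show ?thesis using IH p chiY' cardY by linarith
    qed
  next
    case True
    show ?thesis
    proof (cases "alpha2 S")
      case True
      then show ?thesis using alpha2_case[OF fin ne] \<open>Y = {}\<close> chi_empty by simp
    next
      case False
      then obtain x y z where xyz: "x \<in> S" "y \<in> S" "z \<in> S" "x \<noteq> y" "x \<noteq> z" "y \<noteq> z"
        "\<not> E x y" "\<not> E x z" "\<not> E y z" unfolding alpha2_def by blast
      define C where "C = {x, y, z}"
      have Cind: "indep C" unfolding C_def indep_def using xyz symE irrE by blast
      have CS: "C \<subseteq> S" using xyz C_def by auto
      have C3: "card C = 3" using xyz C_def by auto
      obtain I where I: "C \<subseteq> I" "I \<subseteq> S" "indep I" "\<forall>v\<in>S - I. \<exists>u\<in>I. E v u"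
        using indep_max_ext[OF fin CS Cind] by blast
      have I3: "card I \<ge> 3" using C3 I(1) I(2) fin finite_subset card_mono by metis
      show ?thesis
      proof (cases "S - I = {}")
        case True
        then have "S = I" using I(2) by auto
        then have "chi S \<le> 1" using chi_indep_le1 I(3) by simp
        then show ?thesis using \<open>Y = {}\<close> I3 \<open>S = I\<close> by simp
      next
        case ne': False
        have lt: "card (S - I) < card S" using fin I(2) I3
          by (metis Diff_subset card_Diff_subset card_gt_0_iff diff_less finite_subset subset_empty
                    not_numeral_le_zero card.empty)
        have IH: "4 * chi (S - I) + card ({}::'a set) \<le> 2 * om (S - I) + Dl (S - I) + card (S - I) + 1 + 3 * chi {}"
          using less.hyps[OF lt, of "{}"] fin ne' by simp
        note p = peel[OF fin I(2) I(3) I(4) ne']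
        show ?thesis using IH p I3 \<open>Y = {}\<close> chi_empty by simp
      qed
    qed
  qed
qed

end
context sg begin

lemma join_bound:
  assumes finA: "finite A" and finB: "finite B" and disj: "A \<inter> B = {}" and neA: "A \<noteq> {}" and neB: "B \<noteq> {}"
    and cross: "\<forall>a\<in>A. \<forall>b\<in>B. E a b" and YS: "Y \<subseteq> A \<union> B"
  shows "4 * chi (A \<union> B) + card Y \<le> 2 * om (A \<union> B) + 2 * Dl (A \<union> B) + 2 + 3 * chi Y"
proof -
  have crossB: "\<forall>b\<in>B. \<forall>a\<in>A. E b a" using cross symE by blast
  have rA: "4 * chi A + card (Y \<inter> A) \<le> 2 * om A + Dl A + card A + 1 + 3 * chi (Y \<inter> A)"
    using RH[OF finA neA] by auto
  have rB: "4 * chi B + card (Y \<inter> B) \<le> 2 * om B + Dl B + card B + 1 + 3 * chi (Y \<inter> B)"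
    using RH[OF finB neB] by auto
  have c1: "chi (A \<union> B) \<le> chi A + chi B" using chi_union finA finB by blast
  have finYA: "finite (Y \<inter> A)" "finite (Y \<inter> B)" using finA finB by auto
  have YAB: "(Y \<inter> A) \<union> (Y \<inter> B) = Y" using YS by auto
  have c2: "chi (Y \<inter> A) + chi (Y \<inter> B) \<le> chi Y"
    using chi_join[OF finYA, of] disj cross YAB by (metis Int_iff inf_assoc inf_bot_right inf_left_commute)
  have c3: "card Y = card (Y \<inter> A) + card (Y \<inter> B)"
    using card_Un_disjoint[OF finYA] disj YAB by (metis inf_assoc inf_bot_right inf_left_commute inf_sup_aci(1))
  have o: "om A + om B \<le> om (A \<union> B)" using om_join[OF finA finB disj cross] .
  have d1: "Dl A + card B \<le> Dl (A \<union> B)" using Dl_join[OF finA finB disj cross neA] .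
  have d2: "Dl B + card A \<le> Dl (A \<union> B)"
    using Dl_join[OF finB finA _ crossB neB] disj by (simp add: Un_commute Int_commute)
  show ?thesis using rA rB c1 c2 c3 o d1 d2 by linarith
qed

lemma chi_induced: "chromatic_number S (induced_edges S E) = chi S"
proof -
  have "proper_colouring S (induced_edges S E) = proper_colouring S E"
    unfolding proper_colouring_def induced_edges_def by (intro ext) auto
  then show ?thesis unfolding chi_def chromatic_number_def by simp
qed

end

lemma rtranclp_pair:
  assumes "(induced_edges {x, y} R)\<^sup>*\<^sup>* x w" "\<not> R x y" "\<not> R x x"
  shows "w = x"
  using assms by (induction rule: rtranclp_induct) (auto simp: induced_edges_def)

theorem corollary5:
  fixes V :: "'a set" and E :: "'a \<Rightarrow> 'a \<Rightarrow> bool" and S :: "'a set"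
  assumes "simple_graph V E"
    and "S \<subseteq> V" and "S \<noteq> {}"
  shows "real (chromatic_number V E)
     \<le> (real (clique_number V E) + real (max_degree V E) + 1) / 2
       + (5 * real (vertex_connectivity V (complement_edges V E))
          + 3 * real (chromatic_number S (induced_edges S E)) - real (card S)) / 4"
proof -
  have sg: "finite V" "V \<noteq> {}" "\<And>x y. E x y \<Longrightarrow> x \<in> V \<and> y \<in> V" "\<And>x y. E x y \<Longrightarrow> E y x" "\<And>x. \<not> E x x"
    using assms(1) unfolding simple_graph_def by auto
  interpret sg E using sg(4,5) by unfold_locales auto
  define Eb where "Eb = complement_edges V E"
  have finV: "finite V" using sg by auto
  have finS: "finite S" using finV assms(2) finite_subset by blast
  have chiS: "chromatic_number S (induced_edges S E) = chi S" by (rule chi_induced)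
  have chiV: "chromatic_number V E = chi V" and omV: "clique_number V E = om V" and DlV: "max_degree V E = Dl V"
    unfolding chi_def om_def Dl_def by auto
  have chiS1: "chi S \<ge> 1" using chi_pos finS assms(3) by auto
  have om1: "om V \<ge> 1" using om_pos finV sg(2) by blast
  have cSV: "card S \<le> card V" using card_mono finV assms(2) by blast
  show ?thesis
  proof (cases "complete_graph V Eb")
    case True
    have "indep V" unfolding indep_def
    proof (intro ballI)
      fix x y assume "x \<in> V" "y \<in> V"
      then show "\<not> E x y" using True irrE unfolding complete_graph_def Eb_def complement_edges_def
        by (cases "x = y") auto
    qed
    then have "chi V \<le> 1" by (rule chi_indep_le1)
    moreover have "vertex_connectivity V Eb = card V - 1" using True unfolding vertex_connectivity_def by simp
    moreover have "card V \<ge> 1" using finV sg(2) by (simp add: Suc_leI card_gt_0_iff)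
    ultimately show ?thesis unfolding chiV omV DlV chiS Eb_def[symmetric]
      using chiS1 om1 cSV by (simp add: of_nat_diff field_simps)
  next
    case False
    define KS where "KS = {card K | K. K \<subseteq> V \<and> disconnected (V - K) Eb}"
    have vc: "vertex_connectivity V Eb = Min KS" using False unfolding vertex_connectivity_def KS_def by simp
    have finKS: "finite KS"
    proof -
      have "KS \<subseteq> card ` Pow V" unfolding KS_def by auto
      then show ?thesis using finV finite_subset by blast
    qed
    have neKS: "KS \<noteq> {}"
    proof -
      obtain x y where xy: "x \<in> V" "y \<in> V" "x \<noteq> y" "\<not> Eb x y"
        using False unfolding complete_graph_def by blast
      have "disconnected (V - (V - {x, y})) Eb"
      proof -
        have eq: "V - (V - {x, y}) = {x, y}" using xy by auto
        have "\<not> (induced_edges {x, y} Eb)\<^sup>*\<^sup>* x y"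
        proof
          assume "(induced_edges {x, y} Eb)\<^sup>*\<^sup>* x y"
          then have "y = x" using rtranclp_pair[of x y Eb y] xy
            unfolding Eb_def complement_edges_def by auto
          then show False using xy by simp
        qed
        then show ?thesis unfolding disconnected_def eq by blast
      qed
      then show ?thesis unfolding KS_def by blast
    qed
    obtain K where K: "K \<subseteq> V" "disconnected (V - K) Eb" "card K = vertex_connectivity V Eb"
      using Min_in[OF finKS neKS] vc unfolding KS_def by auto
    define R where "R = induced_edges (V - K) Eb"
    obtain u v where uv: "u \<in> V - K" "v \<in> V - K" "\<not> R\<^sup>*\<^sup>* u v"
      using K(2) unfolding disconnected_def R_def by blast
    define A where "A = {w \<in> V - K. R\<^sup>*\<^sup>* u w}"
    define B where "B = (V - K) - A"
    have uA: "u \<in> A" unfolding A_def using uv by auto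
    have vB: "v \<in> B" unfolding B_def A_def using uv by auto
    have cross: "\<forall>a\<in>A. \<forall>b\<in>B. E a b"
    proof (intro ballI)
      fix a b assume ab: "a \<in> A" "b \<in> B"
      show "E a b"
      proof (rule ccontr)
        assume "\<not> E a b"
        moreover have "a \<noteq> b" using ab unfolding B_def by auto
        moreover have "a \<in> V - K" "b \<in> V - K" using ab unfolding A_def B_def by auto
        ultimately have "R a b" unfolding R_def induced_edges_def Eb_def complement_edges_def by auto
        moreover have "R\<^sup>*\<^sup>* u a" using ab unfolding A_def by auto
        ultimately have "R\<^sup>*\<^sup>* u b" by auto
        then show False using ab \<open>b \<in> V - K\<close> unfolding A_def B_def by auto
      qed
    qed
    have finA: "finite A" and finB: "finite B" using finV unfolding A_def B_def by auto
    have disj: "A \<inter> B = {}" unfolding B_def by auto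
    have neA: "A \<noteq> {}" and neB: "B \<noteq> {}" using uA vB by auto
    have AB: "A \<union> B = V - K" unfolding B_def A_def by auto
    define Y where "Y = S - K"
    have YAB: "Y \<subseteq> A \<union> B" using assms(2) AB unfolding Y_def by auto
    have J: "4 * chi (A \<union> B) + card Y \<le> 2 * om (A \<union> B) + 2 * Dl (A \<union> B) + 2 + 3 * chi Y"
      using join_bound[OF finA finB disj neA neB cross YAB] .
    have finK: "finite K" using K(1) finV finite_subset by blast
    have c1: "chi V \<le> chi (A \<union> B) + card K"
    proof -
      have "V = (A \<union> B) \<union> K" using AB K(1) by auto
      then have "chi V \<le> chi (A \<union> B) + chi K" using chi_union finA finB finK by (metis finite_UnI)
      then show ?thesis using chi_le_card[OF finK] by linarith
    qed
    have o1: "om (A \<union> B) \<le> om V" using om_mono finV AB by auto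
    have d1: "Dl (A \<union> B) \<le> Dl V" using Dl_mono finV AB neA by auto
    have y1: "chi Y \<le> chi S" using chi_mono finS unfolding Y_def by auto
    have y2: "card S \<le> card Y + card K"
    proof -
      have "S \<subseteq> Y \<union> K" unfolding Y_def by auto
      then have "card S \<le> card (Y \<union> K)" using finS finK Y_def by (intro card_mono) auto
      also have "\<dots> \<le> card Y + card K" by (rule card_Un_le)
      finally show ?thesis .
    qed
    have nat_ineq: "4 * chi V + card S \<le> 2 * om V + 2 * Dl V + 2 + 3 * chi S + 5 * card K"
      using J c1 o1 d1 y1 y2 by linarith
    then have real_ineq: "4 * real (chi V) + real (card S) \<le> 2 * real (om V) + 2 * real (Dl V) + 2 + 3 * real (chi S) + 5 * real (card K)"
      by (metis (mono_tags, lifting) of_nat_add of_nat_le_iff of_nat_mult of_nat_numeral)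
    show ?thesis unfolding chiV omV DlV chiS Eb_def[symmetric] K(3)[symmetric]
      using real_ineq by (simp add: field_simps)
  qed
qed

end
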